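(* Let $\gamma:\mathrm{Cl}(V,h)\to\mathrm{End}_\mathbb{C}(S)$ and $\gamma':\mathrm{Cl}(V',h')\to\mathrm{End}_\mathbb{C}(S')$ be weakly-faithful complex Clifford representations. Then any isomorphism $(\varphi_0,\varphi):\gamma\to\gamma'$ of complex Clifford representations is determined by the linear isomorphism $\varphi:S\to S'$: we have $\mathrm{Ad}(\varphi)(\gamma(V))=\gamma'(V')$ and $\varphi_0=(\gamma'|_{V'})^{-1}\circ\mathrm{Ad}(\varphi)\circ\gamma|_V$. Conversely, any $\mathbb{C}$-linear isomorphism $\varphi:S\to S'$ satisfying $\mathrm{Ad}(\varphi)(\gamma(V))=\gamma'(V')$ determines an isomorphism of quadratic spaces $\varphi_0:(V,h)\to(V',h')$ through $\varphi_0=(\gamma'|_{V'})^{-1}\circ\mathrm{Ad}(\varphi)\circ\gamma|_V$, and $(\varphi_0,\varphi)$ is an isomorphism of complex Clifford representations from $\gamma$ to $\gamma'$.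
   Context: Real quadratic spaces $(V,h)$ are finite-dimensional real vector spaces with non-degenerate symmetric bilinear forms; $\mathrm{Cl}(V,h)$ is the real Clifford algebra, and an isometry $\varphi_0$ induces the unique unital algebra morphism $\mathrm{Cl}(\varphi_0)$ extending it. A complex Clifford representation is a unital morphism of real algebras $\gamma:\mathrm{Cl}(V,h)\to\mathrm{End}_\mathbb{C}(S)$, $S$ a finite-dimensional complex vector space; it is weakly-faithful if $\gamma|_V:V\to\mathrm{End}_\mathbb{C}(S)$ is injective. A morphism from $\gamma$ to $\gamma'$ is a pair $(\varphi_0,\varphi)$, $\varphi_0:(V,h)\to(V',h')$ an isometry and $\varphi:S\to S'$ $\mathbb{C}$-linear, with $\gamma'(\mathrm{Cl}(\varphi_0)(x))\circ\varphi=\varphi\circ\gamma(x)$ for all $x\in\mathrm{Cl}(V,h)$; it is an isomorphism iff $\varphi_0$ and $\varphi$ are bijective. $\mathrm{Ad}(\varphi)(A)=\varphi\circ A\circ\varphi^{-1}$. *)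

theory Defs
  imports "HOL-Analysis.Analysis"
begin

text \<open>A real quadratic space (V,h): V is a finite-dimensional real vector space (the whole
type, of class real_vector, required to be spanned by a finite set) and h a non-degenerate symmetric bilinear form.\<close>

definition quadratic_space :: "('v::real_vector \<Rightarrow> 'v \<Rightarrow> real) \<Rightarrow> bool" where
  "quadratic_space h \<longleftrightarrow> (\<exists>B. finite B \<and> span B = (UNIV :: 'v set)) \<and>
     (\<forall>x. linear (h x)) \<and> (\<forall>x y. h x y = h y x) \<and> (\<forall>x. (\<forall>y. h x y = 0) \<longrightarrow> x = 0)"

definition isometry ::
  "('v::real_vector \<Rightarrow> 'v \<Rightarrow> real) \<Rightarrow> ('w::real_vector \<Rightarrow> 'w \<Rightarrow> real) \<Rightarrow> ('v \<Rightarrow> 'w) \<Rightarrow> bool" where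
  "isometry h h' f \<longleftrightarrow> linear f \<and> (\<forall>x y. h' (f x) (f y) = h x y)"

text \<open>Free real algebra on the set V: finitely supported functions on words.\<close>

definition free_alg :: "('v list \<Rightarrow> real) set" where
  "free_alg = {f. finite {w. f w \<noteq> 0}}"

definition fa_add :: "('v list \<Rightarrow> real) \<Rightarrow> ('v list \<Rightarrow> real) \<Rightarrow> ('v list \<Rightarrow> real)" where
  "fa_add f g = (\<lambda>w. f w + g w)"

definition fa_scale :: "real \<Rightarrow> ('v list \<Rightarrow> real) \<Rightarrow> ('v list \<Rightarrow> real)" where
  "fa_scale r f = (\<lambda>w. r * f w)"

definition fa_mult :: "('v list \<Rightarrow> real) \<Rightarrow> ('v list \<Rightarrow> real) \<Rightarrow> ('v list \<Rightarrow> real)" where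
  "fa_mult f g = (\<lambda>w. \<Sum>i\<le>length w. f (take i w) * g (drop i w))"

definition fa_word :: "'v list \<Rightarrow> ('v list \<Rightarrow> real)" where
  "fa_word u = (\<lambda>w. if w = u then 1 else 0)"

text \<open>Two-sided ideal generated by the linearity relations (turning the free algebra into the
tensor algebra T(V)) and the Clifford relations v \<otimes> v - h(v,v) 1.\<close>

inductive_set cl_ideal :: "('v::real_vector \<Rightarrow> 'v \<Rightarrow> real) \<Rightarrow> ('v list \<Rightarrow> real) set"
  for h :: "'v \<Rightarrow> 'v \<Rightarrow> real" where
  gen_add: "fa_add (fa_word [x + y]) (fa_scale (-1) (fa_add (fa_word [x]) (fa_word [y]))) \<in> cl_ideal h"
| gen_scale: "fa_add (fa_word [scaleR a x]) (fa_scale (- a) (fa_word [x])) \<in> cl_ideal h"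
| gen_cliff: "fa_add (fa_word [x, x]) (fa_scale (- h x x) (fa_word [])) \<in> cl_ideal h"
| zero: "(\<lambda>w. 0) \<in> cl_ideal h"
| add: "f \<in> cl_ideal h \<Longrightarrow> g \<in> cl_ideal h \<Longrightarrow> fa_add f g \<in> cl_ideal h"
| scale: "f \<in> cl_ideal h \<Longrightarrow> fa_scale r f \<in> cl_ideal h"
| lmult: "f \<in> cl_ideal h \<Longrightarrow> g \<in> free_alg \<Longrightarrow> fa_mult g f \<in> cl_ideal h"
| rmult: "f \<in> cl_ideal h \<Longrightarrow> g \<in> free_alg \<Longrightarrow> fa_mult f g \<in> cl_ideal h"

definition cl_class :: "('v::real_vector \<Rightarrow> 'v \<Rightarrow> real) \<Rightarrow> ('v list \<Rightarrow> real) \<Rightarrow> ('v list \<Rightarrow> real) set" where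
  "cl_class h f = {g \<in> free_alg. fa_add f (fa_scale (-1) g) \<in> cl_ideal h}"

definition Cl :: "('v::real_vector \<Rightarrow> 'v \<Rightarrow> real) \<Rightarrow> ('v list \<Rightarrow> real) set set" where
  "Cl h = cl_class h ` free_alg"

definition cl_rep :: "('v list \<Rightarrow> real) set \<Rightarrow> ('v list \<Rightarrow> real)" where
  "cl_rep X = (SOME f. f \<in> X)"

definition cl_add :: "('v::real_vector \<Rightarrow> 'v \<Rightarrow> real) \<Rightarrow> ('v list \<Rightarrow> real) set \<Rightarrow> ('v list \<Rightarrow> real) set \<Rightarrow> ('v list \<Rightarrow> real) set" where
  "cl_add h X Y = cl_class h (fa_add (cl_rep X) (cl_rep Y))"

definition cl_mult :: "('v::real_vector \<Rightarrow> 'v \<Rightarrow> real) \<Rightarrow> ('v list \<Rightarrow> real) set \<Rightarrow> ('v list \<Rightarrow> real) set \<Rightarrow> ('v list \<Rightarrow> real) set" where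
  "cl_mult h X Y = cl_class h (fa_mult (cl_rep X) (cl_rep Y))"

definition cl_scale :: "('v::real_vector \<Rightarrow> 'v \<Rightarrow> real) \<Rightarrow> real \<Rightarrow> ('v list \<Rightarrow> real) set \<Rightarrow> ('v list \<Rightarrow> real) set" where
  "cl_scale h r X = cl_class h (fa_scale r (cl_rep X))"

definition cl_one :: "('v::real_vector \<Rightarrow> 'v \<Rightarrow> real) \<Rightarrow> ('v list \<Rightarrow> real) set" where
  "cl_one h = cl_class h (fa_word [])"

definition cl_iota :: "('v::real_vector \<Rightarrow> 'v \<Rightarrow> real) \<Rightarrow> 'v \<Rightarrow> ('v list \<Rightarrow> real) set" where
  "cl_iota h v = cl_class h (fa_word [v])"

definition cl_alg_hom ::
  "('v::real_vector \<Rightarrow> 'v \<Rightarrow> real) \<Rightarrow> ('w::real_vector \<Rightarrow> 'w \<Rightarrow> real)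
   \<Rightarrow> (('v list \<Rightarrow> real) set \<Rightarrow> ('w list \<Rightarrow> real) set) \<Rightarrow> bool" where
  "cl_alg_hom h h' \<Phi> \<longleftrightarrow>
     (\<forall>X\<in>Cl h. \<Phi> X \<in> Cl h') \<and>
     (\<forall>X\<in>Cl h. \<forall>Y\<in>Cl h. \<Phi> (cl_add h X Y) = cl_add h' (\<Phi> X) (\<Phi> Y)) \<and>
     (\<forall>X\<in>Cl h. \<forall>Y\<in>Cl h. \<Phi> (cl_mult h X Y) = cl_mult h' (\<Phi> X) (\<Phi> Y)) \<and>
     (\<forall>r. \<forall>X\<in>Cl h. \<Phi> (cl_scale h r X) = cl_scale h' r (\<Phi> X)) \<and>
     \<Phi> (cl_one h) = cl_one h' \<and>
     (\<forall>X. X \<notin> Cl h \<longrightarrow> \<Phi> X = undefined)"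

definition cl_map ::
  "('v::real_vector \<Rightarrow> 'v \<Rightarrow> real) \<Rightarrow> ('w::real_vector \<Rightarrow> 'w \<Rightarrow> real) \<Rightarrow> ('v \<Rightarrow> 'w)
   \<Rightarrow> (('v list \<Rightarrow> real) set \<Rightarrow> ('w list \<Rightarrow> real) set)" where
  "cl_map h h' \<phi>0 = (THE \<Phi>. cl_alg_hom h h' \<Phi> \<and> (\<forall>v. \<Phi> (cl_iota h v) = cl_iota h' (\<phi>0 v)))"

text \<open>A finite-dimensional complex vector space: a type with a complex scalar multiplication sc.\<close>
definition fd_complex_space :: "(complex \<Rightarrow> 's::ab_group_add \<Rightarrow> 's) \<Rightarrow> bool" where
  "fd_complex_space sc \<longleftrightarrow> (\<exists>B. finite_dimensional_vector_space sc B)"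

definition clifford_rep ::
  "('v::real_vector \<Rightarrow> 'v \<Rightarrow> real) \<Rightarrow> (complex \<Rightarrow> 's::ab_group_add \<Rightarrow> 's)
   \<Rightarrow> (('v list \<Rightarrow> real) set \<Rightarrow> ('s \<Rightarrow> 's)) \<Rightarrow> bool" where
  "clifford_rep h sc \<gamma> \<longleftrightarrow>
     (\<forall>X\<in>Cl h. Vector_Spaces.linear sc sc (\<gamma> X)) \<and>
     (\<forall>X\<in>Cl h. \<forall>Y\<in>Cl h. \<gamma> (cl_add h X Y) = (\<lambda>s. \<gamma> X s + \<gamma> Y s)) \<and>
     (\<forall>X\<in>Cl h. \<forall>Y\<in>Cl h. \<gamma> (cl_mult h X Y) = \<gamma> X \<circ> \<gamma> Y) \<and>
     (\<forall>r. \<forall>X\<in>Cl h. \<gamma> (cl_scale h r X) = (\<lambda>s. sc (complex_of_real r) (\<gamma> X s))) \<and>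
     \<gamma> (cl_one h) = id"

definition rep_V :: "('v::real_vector \<Rightarrow> 'v \<Rightarrow> real) \<Rightarrow> (('v list \<Rightarrow> real) set \<Rightarrow> 'e) \<Rightarrow> 'v \<Rightarrow> 'e" where
  "rep_V h \<gamma> = \<gamma> \<circ> cl_iota h"

definition weakly_faithful :: "('v::real_vector \<Rightarrow> 'v \<Rightarrow> real) \<Rightarrow> (('v list \<Rightarrow> real) set \<Rightarrow> 'e) \<Rightarrow> bool" where
  "weakly_faithful h \<gamma> \<longleftrightarrow> inj (rep_V h \<gamma>)"

definition clifford_rep_morphism ::
  "('v::real_vector \<Rightarrow> 'v \<Rightarrow> real) \<Rightarrow> ('w::real_vector \<Rightarrow> 'w \<Rightarrow> real)
   \<Rightarrow> (complex \<Rightarrow> 's::ab_group_add \<Rightarrow> 's) \<Rightarrow> (complex \<Rightarrow> 't::ab_group_add \<Rightarrow> 't)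
   \<Rightarrow> (('v list \<Rightarrow> real) set \<Rightarrow> ('s \<Rightarrow> 's)) \<Rightarrow> (('w list \<Rightarrow> real) set \<Rightarrow> ('t \<Rightarrow> 't))
   \<Rightarrow> ('v \<Rightarrow> 'w) \<Rightarrow> ('s \<Rightarrow> 't) \<Rightarrow> bool" where
  "clifford_rep_morphism h h' sc sc' \<gamma> \<gamma>' \<phi>0 \<phi> \<longleftrightarrow>
     isometry h h' \<phi>0 \<and> Vector_Spaces.linear sc sc' \<phi> \<and>
     (\<forall>X\<in>Cl h. \<gamma>' (cl_map h h' \<phi>0 X) \<circ> \<phi> = \<phi> \<circ> \<gamma> X)"

definition clifford_rep_iso ::
  "('v::real_vector \<Rightarrow> 'v \<Rightarrow> real) \<Rightarrow> ('w::real_vector \<Rightarrow> 'w \<Rightarrow> real)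
   \<Rightarrow> (complex \<Rightarrow> 's::ab_group_add \<Rightarrow> 's) \<Rightarrow> (complex \<Rightarrow> 't::ab_group_add \<Rightarrow> 't)
   \<Rightarrow> (('v list \<Rightarrow> real) set \<Rightarrow> ('s \<Rightarrow> 's)) \<Rightarrow> (('w list \<Rightarrow> real) set \<Rightarrow> ('t \<Rightarrow> 't))
   \<Rightarrow> ('v \<Rightarrow> 'w) \<Rightarrow> ('s \<Rightarrow> 't) \<Rightarrow> bool" where
  "clifford_rep_iso h h' sc sc' \<gamma> \<gamma>' \<phi>0 \<phi> \<longleftrightarrow>
     clifford_rep_morphism h h' sc sc' \<gamma> \<gamma>' \<phi>0 \<phi> \<and> bij \<phi>0 \<and> bij \<phi>"

definition Ad :: "('s \<Rightarrow> 't) \<Rightarrow> ('s \<Rightarrow> 's) \<Rightarrow> ('t \<Rightarrow> 't)" where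
  "Ad \<phi> A = \<phi> \<circ> A \<circ> inv \<phi>"

end

theory Submission
  imports Defs
begin


lemma free_algI: "finite A \<Longrightarrow> {w. f w \<noteq> 0} \<subseteq> A \<Longrightarrow> f \<in> free_alg"
  unfolding free_alg_def using finite_subset by blast

lemma fa_word_free: "fa_word u \<in> free_alg"
  unfolding fa_word_def by (rule free_algI[of "{u}"]) auto

lemma zero_free: "(\<lambda>w. 0) \<in> free_alg"
  unfolding free_alg_def by simp

lemma fa_add_free: "f \<in> free_alg \<Longrightarrow> g \<in> free_alg \<Longrightarrow> fa_add f g \<in> free_alg"
  unfolding fa_add_def
  by (rule free_algI[of "{w. f w \<noteq> 0} \<union> {w. g w \<noteq> 0}"]) (auto simp: free_alg_def)

lemma fa_scale_free: "f \<in> free_alg \<Longrightarrow> fa_scale r f \<in> free_alg"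
  unfolding fa_scale_def
  by (rule free_algI[of "{w. f w \<noteq> 0}"]) (auto simp: free_alg_def)

lemma lam_add_free: "f \<in> free_alg \<Longrightarrow> g \<in> free_alg \<Longrightarrow> (\<lambda>w. f w + g w) \<in> free_alg"
  using fa_add_free unfolding fa_add_def by blast

lemma lam_sub_free: "f \<in> free_alg \<Longrightarrow> g \<in> free_alg \<Longrightarrow> (\<lambda>w. f w - g w) \<in> free_alg"
  by (rule free_algI[of "{w. f w \<noteq> 0} \<union> {w. g w \<noteq> 0}"]) (auto simp: free_alg_def)

lemma fa_mult_supp:
  "{w. fa_mult f g w \<noteq> 0} \<subseteq> (\<lambda>(a,b). a @ b) ` ({w. f w \<noteq> 0} \<times> {w. g w \<noteq> 0})"
proof
  fix w assume "w \<in> {w. fa_mult f g w \<noteq> 0}"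
  then have "(\<Sum>i\<le>length w. f (take i w) * g (drop i w)) \<noteq> 0" by (simp add: fa_mult_def)
  then obtain i where "f (take i w) * g (drop i w) \<noteq> 0"
    by (meson sum.neutral)
  then show "w \<in> (\<lambda>(a,b). a @ b) ` ({w. f w \<noteq> 0} \<times> {w. g w \<noteq> 0})"
    by (auto intro!: image_eqI[of _ _ "(take i w, drop i w)"])
qed

lemma fa_mult_free: "f \<in> free_alg \<Longrightarrow> g \<in> free_alg \<Longrightarrow> fa_mult f g \<in> free_alg"
  by (rule free_algI[OF _ fa_mult_supp]) (auto simp: free_alg_def)

lemma ideal_free: "f \<in> cl_ideal h \<Longrightarrow> f \<in> free_alg"
  by (induction rule: cl_ideal.induct)
     (auto intro!: fa_add_free fa_scale_free fa_word_free zero_free fa_mult_free)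

lemma fa_mult_add_left: "fa_mult (fa_add f f') g = fa_add (fa_mult f g) (fa_mult f' g)"
  unfolding fa_mult_def fa_add_def by (auto simp: sum.distrib distrib_right)

lemma fa_mult_add_right: "fa_mult g (fa_add f f') = fa_add (fa_mult g f) (fa_mult g f')"
  unfolding fa_mult_def fa_add_def by (auto simp: sum.distrib distrib_left)

lemma fa_mult_scale_left: "fa_mult (fa_scale r f) g = fa_scale r (fa_mult f g)"
  unfolding fa_mult_def fa_scale_def by (auto simp: sum_distrib_left mult.assoc)

lemma fa_mult_scale_right: "fa_mult g (fa_scale r f) = fa_scale r (fa_mult g f)"
  unfolding fa_mult_def fa_scale_def by (auto simp: sum_distrib_left mult_ac)

lemma fa_mult_zero_left: "fa_mult (\<lambda>w. 0) g = (\<lambda>w. 0)"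
  unfolding fa_mult_def by simp

lemma fa_mult_zero_right: "fa_mult g (\<lambda>w. 0) = (\<lambda>w. 0)"
  unfolding fa_mult_def by simp

lemma fa_mult_diff:
  "(\<lambda>w. fa_mult a b w - fa_mult c e w) =
   fa_add (fa_mult (\<lambda>w. a w - c w) b) (fa_mult c (\<lambda>w. b w - e w))"
  unfolding fa_mult_def fa_add_def
  by (auto simp: sum_subtractf[symmetric] sum.distrib[symmetric] algebra_simps)

lemma take_drop_eq_iff:
  assumes "i \<le> length x"
  shows "(take i x = a \<and> drop i x = b) \<longleftrightarrow> (i = length a \<and> x = a @ b)"
  using assms by (metis append_eq_conv_conj length_take min.absorb2)

lemma fa_word_mult: "fa_mult (fa_word a) (fa_word b) = fa_word (a @ b)"
proof
  fix x
  have "fa_mult (fa_word a) (fa_word b) x =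
        (\<Sum>i\<le>length x. if i = length a \<and> x = a @ b then 1 else 0)"
    unfolding fa_mult_def fa_word_def
    by (rule sum.cong) (auto simp: take_drop_eq_iff)
  also have "\<dots> = fa_word (a @ b) x"
    unfolding fa_word_def by (auto simp: sum.delta)
  finally show "fa_mult (fa_word a) (fa_word b) x = fa_word (a @ b) x" .
qed

lemma fa_induct[consumes 1, case_names zero step]:
  assumes f: "f \<in> free_alg"
    and z: "P (\<lambda>w. 0)"
    and s: "\<And>f a c. f \<in> free_alg \<Longrightarrow> P f \<Longrightarrow> f a = 0 \<Longrightarrow> P (fa_add f (fa_scale c (fa_word a)))"
  shows "P f"
proof -
  have "\<forall>f. f \<in> free_alg \<longrightarrow> {w. f w \<noteq> 0} \<subseteq> A \<longrightarrow> P f" if "finite A" for A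
    using that
  proof (induction A rule: finite_induct)
    case empty
    show ?case
    proof (intro allI impI)
      fix f :: "'a list \<Rightarrow> real" assume "{w. f w \<noteq> 0} \<subseteq> {}"
      then have "f = (\<lambda>w. 0)" by auto
      then show "P f" using z by simp
    qed
  next
    case (insert a A)
    show ?case
    proof (intro allI impI)
      fix f :: "'a list \<Rightarrow> real" assume f: "f \<in> free_alg" and sf: "{w. f w \<noteq> 0} \<subseteq> insert a A"
      define g where "g = f(a := 0)"
      have gf: "g \<in> free_alg" using f unfolding g_def
        by (intro free_algI[of "{w. f w \<noteq> 0}"]) (auto simp: free_alg_def)
      have "{w. g w \<noteq> 0} \<subseteq> A" using sf unfolding g_def by auto
      then have "P g" using insert.IH gf by blast
      moreover have "g a = 0" by (simp add: g_def)
      ultimately have "P (fa_add g (fa_scale (f a) (fa_word a)))" using s gf by blast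
      moreover have "fa_add g (fa_scale (f a) (fa_word a)) = f"
        unfolding g_def fa_add_def fa_scale_def fa_word_def by auto
      ultimately show "P f" by simp
    qed
  qed
  then show ?thesis using f unfolding free_alg_def by blast
qed



lemma I_lam_add: "a \<in> cl_ideal h \<Longrightarrow> b \<in> cl_ideal h \<Longrightarrow> (\<lambda>w. a w + b w) \<in> cl_ideal h"
  using cl_ideal.add[of a h b] by (simp add: fa_add_def)

lemma I_lam_scale: "a \<in> cl_ideal h \<Longrightarrow> (\<lambda>w. r * a w) \<in> cl_ideal h"
  using cl_ideal.scale[of a h r] by (simp add: fa_scale_def)

lemma I_lam_sub: "a \<in> cl_ideal h \<Longrightarrow> b \<in> cl_ideal h \<Longrightarrow> (\<lambda>w. a w - b w) \<in> cl_ideal h"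
  using I_lam_add[of a h "\<lambda>w. (-1) * b w"] I_lam_scale[of b h "-1"] by simp

lemma I_zero: "(\<lambda>w. 0) \<in> cl_ideal h" by (rule cl_ideal.zero)

lemma cl_class_alt: "cl_class h f = {g \<in> free_alg. (\<lambda>w. f w - g w) \<in> cl_ideal h}"
  unfolding cl_class_def fa_add_def fa_scale_def by simp

lemma in_class_iff: "g \<in> cl_class h f \<longleftrightarrow> g \<in> free_alg \<and> (\<lambda>w. f w - g w) \<in> cl_ideal h"
  unfolding cl_class_alt by simp

lemma in_class_self: "f \<in> free_alg \<Longrightarrow> f \<in> cl_class h f"
  unfolding cl_class_alt using I_zero by simp

lemma class_eq_iff:
  assumes "f \<in> free_alg" "g \<in> free_alg"
  shows "cl_class h f = cl_class h g \<longleftrightarrow> (\<lambda>w. f w - g w) \<in> cl_ideal h"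
proof
  assume "cl_class h f = cl_class h g"
  then have "g \<in> cl_class h f" using in_class_self[OF assms(2), of h] by simp
  then show "(\<lambda>w. f w - g w) \<in> cl_ideal h" using in_class_iff by blast
next
  assume fg: "(\<lambda>w. f w - g w) \<in> cl_ideal h"
  show "cl_class h f = cl_class h g"
  proof (rule set_eqI)
    fix k
    have 1: "(\<lambda>w. f w - k w) \<in> cl_ideal h \<Longrightarrow> (\<lambda>w. g w - k w) \<in> cl_ideal h"
    proof -
      assume a: "(\<lambda>w. f w - k w) \<in> cl_ideal h"
      have "(\<lambda>w. (f w - k w) - (f w - g w)) \<in> cl_ideal h"
        by (rule I_lam_sub[of "\<lambda>w. f w - k w" h "\<lambda>w. f w - g w", OF a fg])
      then show ?thesis by simp
    qed
    have 2: "(\<lambda>w. g w - k w) \<in> cl_ideal h \<Longrightarrow> (\<lambda>w. f w - k w) \<in> cl_ideal h"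
    proof -
      assume a: "(\<lambda>w. g w - k w) \<in> cl_ideal h"
      have "(\<lambda>w. (g w - k w) + (f w - g w)) \<in> cl_ideal h"
        by (rule I_lam_add[of "\<lambda>w. g w - k w" h "\<lambda>w. f w - g w", OF a fg])
      then show ?thesis by simp
    qed
    show "k \<in> cl_class h f \<longleftrightarrow> k \<in> cl_class h g"
      unfolding in_class_iff using 1 2 by blast
  qed
qed

lemma rep_class:
  assumes "f \<in> free_alg"
  shows "cl_rep (cl_class h f) \<in> free_alg" "(\<lambda>w. f w - cl_rep (cl_class h f) w) \<in> cl_ideal h"
proof -
  have "cl_rep (cl_class h f) \<in> cl_class h f"
    unfolding cl_rep_def by (rule someI[of "\<lambda>g. g \<in> cl_class h f", OF in_class_self[OF assms]])
  then show "cl_rep (cl_class h f) \<in> free_alg" "(\<lambda>w. f w - cl_rep (cl_class h f) w) \<in> cl_ideal h"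
    using in_class_iff[of "cl_rep (cl_class h f)" h f] by blast+
qed

lemma class_rep:
  assumes f: "f \<in> free_alg" shows "cl_class h (cl_rep (cl_class h f)) = cl_class h f"
proof -
  have "(\<lambda>w. (-1) * (\<lambda>w. f w - cl_rep (cl_class h f) w) w) \<in> cl_ideal h"
    by (intro I_lam_scale rep_class f)
  then have "(\<lambda>w. cl_rep (cl_class h f) w - f w) \<in> cl_ideal h" by simp
  then show ?thesis using class_eq_iff[OF rep_class(1)[OF f] f, of h] by blast
qed

lemma Cl_iff: "X \<in> Cl h \<longleftrightarrow> (\<exists>f\<in>free_alg. X = cl_class h f)"
  unfolding Cl_def by auto

lemma class_in_Cl: "f \<in> free_alg \<Longrightarrow> cl_class h f \<in> Cl h"
  unfolding Cl_def by auto

lemma Cl_rep: assumes "X \<in> Cl h" shows "cl_rep X \<in> free_alg \<and> X = cl_class h (cl_rep X)"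
proof -
  obtain f where f: "f \<in> free_alg" "X = cl_class h f" using assms Cl_iff by blast
  show ?thesis using rep_class(1)[OF f(1)] class_rep[OF f(1)] f(2) by simp
qed

lemma cl_add_class:
  assumes "f \<in> free_alg" "g \<in> free_alg"
  shows "cl_add h (cl_class h f) (cl_class h g) = cl_class h (fa_add f g)"
proof -
  have "(\<lambda>w. fa_add (cl_rep (cl_class h f)) (cl_rep (cl_class h g)) w - fa_add f g w)
        = (\<lambda>w. (- 1) * ((\<lambda>w. f w - cl_rep (cl_class h f) w) w + (\<lambda>w. g w - cl_rep (cl_class h g) w) w))"
    by (auto simp: fa_add_def algebra_simps)
  also have "\<dots> \<in> cl_ideal h"
    by (intro I_lam_scale I_lam_add rep_class assms)
  finally show ?thesis unfolding cl_add_def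
    by (rule iffD2[OF class_eq_iff[OF fa_add_free[OF rep_class(1)[OF assms(1)] rep_class(1)[OF assms(2)]] fa_add_free[OF assms]]])
qed

lemma cl_scale_class:
  assumes "f \<in> free_alg"
  shows "cl_scale h r (cl_class h f) = cl_class h (fa_scale r f)"
proof -
  have "(\<lambda>w. fa_scale r (cl_rep (cl_class h f)) w - fa_scale r f w)
        = (\<lambda>w. (- r) * ((\<lambda>w. f w - cl_rep (cl_class h f) w) w))"
    by (auto simp: fa_scale_def algebra_simps)
  also have "\<dots> \<in> cl_ideal h"
    by (intro I_lam_scale rep_class assms)
  finally show ?thesis unfolding cl_scale_def
    by (rule iffD2[OF class_eq_iff[OF fa_scale_free[OF rep_class(1)[OF assms]] fa_scale_free[OF assms]]])
qed

lemma cl_mult_class: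
  assumes "f \<in> free_alg" "g \<in> free_alg"
  shows "cl_mult h (cl_class h f) (cl_class h g) = cl_class h (fa_mult f g)"
proof -
  let ?a = "cl_rep (cl_class h f)" and ?b = "cl_rep (cl_class h g)"
  have "(\<lambda>w. fa_mult f g w - fa_mult ?a ?b w) =
     fa_add (fa_mult (\<lambda>w. f w - ?a w) g) (fa_mult ?a (\<lambda>w. g w - ?b w))"
    by (rule fa_mult_diff)
  also have "\<dots> \<in> cl_ideal h"
    by (rule cl_ideal.add[OF cl_ideal.rmult[OF rep_class(2)[OF assms(1)] assms(2)]
         cl_ideal.lmult[OF rep_class(2)[OF assms(2)] rep_class(1)[OF assms(1)]]])
  finally have d: "(\<lambda>w. fa_mult f g w - fa_mult ?a ?b w) \<in> cl_ideal h" .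
  have eq: "(\<lambda>w. (-1) * (fa_mult f g w - fa_mult ?a ?b w)) = (\<lambda>w. fa_mult ?a ?b w - fa_mult f g w)"
    by (rule ext) simp
  have "(\<lambda>w. fa_mult ?a ?b w - fa_mult f g w) \<in> cl_ideal h"
    using I_lam_scale[OF d, of "-1"] eq by (simp only:)
  then show ?thesis unfolding cl_mult_def
    by (rule iffD2[OF class_eq_iff[OF fa_mult_free[OF rep_class(1)[OF assms(1)] rep_class(1)[OF assms(2)]] fa_mult_free[OF assms]]])
qed

lemma Cl_rep_free: "X \<in> Cl h \<Longrightarrow> cl_rep X \<in> free_alg"
  using Cl_rep by blast

lemma cl_add_Cl: "X \<in> Cl h \<Longrightarrow> Y \<in> Cl h \<Longrightarrow> cl_add h X Y \<in> Cl h"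
  unfolding cl_add_def by (rule class_in_Cl[OF fa_add_free[OF Cl_rep_free Cl_rep_free]])
lemma cl_mult_Cl: "X \<in> Cl h \<Longrightarrow> Y \<in> Cl h \<Longrightarrow> cl_mult h X Y \<in> Cl h"
  unfolding cl_mult_def by (rule class_in_Cl[OF fa_mult_free[OF Cl_rep_free Cl_rep_free]])
lemma cl_scale_Cl: "X \<in> Cl h \<Longrightarrow> cl_scale h r X \<in> Cl h"
  unfolding cl_scale_def by (rule class_in_Cl[OF fa_scale_free[OF Cl_rep_free]])
lemma cl_one_Cl: "cl_one h \<in> Cl h"
  unfolding cl_one_def by (rule class_in_Cl[OF fa_word_free])
lemma cl_iota_Cl: "cl_iota h v \<in> Cl h"
  unfolding cl_iota_def by (rule class_in_Cl[OF fa_word_free])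

lemma cl_induct[consumes 1, case_names one iota add mult scale]:
  assumes X: "X \<in> Cl h"
    and one: "P (cl_one h)"
    and iota: "\<And>v. P (cl_iota h v)"
    and add: "\<And>X Y. X \<in> Cl h \<Longrightarrow> Y \<in> Cl h \<Longrightarrow> P X \<Longrightarrow> P Y \<Longrightarrow> P (cl_add h X Y)"
    and mult: "\<And>X Y. X \<in> Cl h \<Longrightarrow> Y \<in> Cl h \<Longrightarrow> P X \<Longrightarrow> P Y \<Longrightarrow> P (cl_mult h X Y)"
    and scale: "\<And>r X. X \<in> Cl h \<Longrightarrow> P X \<Longrightarrow> P (cl_scale h r X)"
  shows "P X"
proof -
  have words: "P (cl_class h (fa_word w))" for w
  proof (induction w)
    case Nil then show ?case using one by (simp add: cl_one_def)
  next
    case (Cons v w)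
    have "fa_word (v # w) = fa_mult (fa_word [v]) (fa_word w)" by (simp add: fa_word_mult)
    have "cl_mult h (cl_iota h v) (cl_class h (fa_word w)) = cl_class h (fa_mult (fa_word [v]) (fa_word w))"
      unfolding cl_iota_def by (rule cl_mult_class[OF fa_word_free fa_word_free])
    then have "cl_class h (fa_word (v # w)) = cl_mult h (cl_iota h v) (cl_class h (fa_word w))"
      using fa_word_mult[of "[v]" w] by simp
    then show ?case using mult[OF cl_iota_Cl class_in_Cl[OF fa_word_free] iota Cons] by simp
  qed
  have "P (cl_class h f)" if "f \<in> free_alg" for f
    using that
  proof (induction rule: fa_induct)
    case zero
    have z: "fa_scale 0 (fa_word []) = (\<lambda>w. 0)" by (simp add: fa_scale_def)
    have "cl_scale h 0 (cl_one h) = cl_class h (\<lambda>w. 0)"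
      unfolding z[symmetric] cl_one_def by (rule cl_scale_class[OF fa_word_free])
    then show ?case using scale[OF cl_one_Cl one, of 0] by simp
  next
    case (step f a c)
    have "cl_class h (fa_add f (fa_scale c (fa_word a))) =
          cl_add h (cl_class h f) (cl_scale h c (cl_class h (fa_word a)))"
      using cl_add_class[OF step.hyps(1) fa_scale_free[OF fa_word_free], of h c a]
        cl_scale_class[OF fa_word_free, of h c a] by simp
    then show ?case
      using add[OF class_in_Cl[OF step.hyps(1)] cl_scale_Cl[OF class_in_Cl[OF fa_word_free]]
          step.IH scale[OF class_in_Cl[OF fa_word_free] words]] by simp
  qed
  note gen = this
  have "P (cl_class h (cl_rep X))" using Cl_rep[OF X] by (intro gen) blast
  moreover have "cl_class h (cl_rep X) = X" using Cl_rep[OF X] by blast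
  ultimately show ?thesis by simp
qed



lemma rep_class_neg: "f \<in> free_alg \<Longrightarrow> (\<lambda>w. cl_rep (cl_class h f) w - f w) \<in> cl_ideal h"
proof -
  assume f: "f \<in> free_alg"
  have eq: "(\<lambda>w. (-1) * (f w - cl_rep (cl_class h f) w)) = (\<lambda>w. cl_rep (cl_class h f) w - f w)"
    by (rule ext) simp
  show ?thesis using I_lam_scale[OF rep_class(2)[where h=h, OF f], of "-1"] eq by (simp only:)
qed

definition fa_map :: "('v \<Rightarrow> 'w) \<Rightarrow> ('v list \<Rightarrow> real) \<Rightarrow> ('w list \<Rightarrow> real)" where
  "fa_map \<phi> f u = (\<Sum>x\<in>{x. f x \<noteq> 0}. if map \<phi> x = u then f x else 0)"

lemma fa_map_eq:
  assumes "finite A" "{x. f x \<noteq> 0} \<subseteq> A"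
  shows "fa_map \<phi> f u = (\<Sum>x\<in>A. if map \<phi> x = u then f x else 0)"
  unfolding fa_map_def by (rule sum.mono_neutral_left[OF assms]) auto

lemma supp_finite: "f \<in> free_alg \<Longrightarrow> finite {x. f x \<noteq> 0}"
  by (simp add: free_alg_def)

lemma fa_map_add:
  assumes f: "f \<in> free_alg" and g: "g \<in> free_alg"
  shows "fa_map \<phi> (fa_add f g) = fa_add (fa_map \<phi> f) (fa_map \<phi> g)"
proof
  fix u
  let ?A = "{x. f x \<noteq> 0} \<union> {x. g x \<noteq> 0}"
  have fin: "finite ?A" using supp_finite[OF f] supp_finite[OF g] by simp
  have "fa_map \<phi> (fa_add f g) u = (\<Sum>x\<in>?A. if map \<phi> x = u then fa_add f g x else 0)"
    by (rule fa_map_eq[OF fin]) (auto simp: fa_add_def)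
  also have "\<dots> = (\<Sum>x\<in>?A. (if map \<phi> x = u then f x else 0) + (if map \<phi> x = u then g x else 0))"
    by (rule sum.cong) (auto simp: fa_add_def)
  also have "\<dots> = fa_map \<phi> f u + fa_map \<phi> g u"
    by (simp add: sum.distrib fa_map_eq[OF fin])
  finally show "fa_map \<phi> (fa_add f g) u = fa_add (fa_map \<phi> f) (fa_map \<phi> g) u"
    by (simp add: fa_add_def)
qed

lemma fa_map_scale:
  "fa_map \<phi> (fa_scale r f) = fa_scale r (fa_map \<phi> f)"
proof
  fix u
  show "fa_map \<phi> (fa_scale r f) u = fa_scale r (fa_map \<phi> f) u"
  proof (cases "r = 0")
    case True then show ?thesis by (simp add: fa_map_def fa_scale_def)
  next
    case False
    then have S: "{x. fa_scale r f x \<noteq> 0} = {x. f x \<noteq> 0}" by (auto simp: fa_scale_def)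
    have "fa_map \<phi> (fa_scale r f) u = (\<Sum>x\<in>{x. f x \<noteq> 0}. r * (if map \<phi> x = u then f x else 0))"
      unfolding fa_map_def S by (rule sum.cong) (auto simp: fa_scale_def)
    also have "\<dots> = r * fa_map \<phi> f u"
      unfolding fa_map_def by (rule sum_distrib_left[symmetric])
    finally show ?thesis by (simp add: fa_scale_def)
  qed
qed

lemma fa_map_zero: "fa_map \<phi> (\<lambda>w. 0) = (\<lambda>w. 0)"
  by (rule ext) (simp add: fa_map_def)

lemma fa_map_word: "fa_map \<phi> (fa_word a) = fa_word (map \<phi> a)"
proof
  fix u
  have "fa_map \<phi> (fa_word a) u = (\<Sum>x\<in>{a}. if map \<phi> x = u then fa_word a x else 0)"
    by (rule fa_map_eq) (auto simp: fa_word_def)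
  then show "fa_map \<phi> (fa_word a) u = fa_word (map \<phi> a) u"
    by (simp add: fa_word_def)
qed

lemma fa_map_free: "f \<in> free_alg \<Longrightarrow> fa_map \<phi> f \<in> free_alg"
proof -
  assume f: "f \<in> free_alg"
  have "{u. fa_map \<phi> f u \<noteq> 0} \<subseteq> map \<phi> ` {x. f x \<noteq> 0}"
  proof
    fix u assume "u \<in> {u. fa_map \<phi> f u \<noteq> 0}"
    then have "fa_map \<phi> f u \<noteq> 0" by (rule CollectD)
    then have "(\<Sum>x\<in>{x. f x \<noteq> 0}. if map \<phi> x = u then f x else 0) \<noteq> 0"
      unfolding fa_map_def .
    then have "\<exists>x\<in>{x. f x \<noteq> 0}. (if map \<phi> x = u then f x else 0) \<noteq> 0"
      using sum.neutral[of "{x. f x \<noteq> 0}" "\<lambda>x. if map \<phi> x = u then f x else 0"] by blast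
    then obtain x where "x \<in> {x. f x \<noteq> 0}" "(if map \<phi> x = u then f x else 0) \<noteq> 0"
      by blast
    then show "u \<in> map \<phi> ` {x. f x \<noteq> 0}" by (auto split: if_splits)
  qed
  then show ?thesis by (rule free_algI[rotated]) (simp add: supp_finite[OF f])
qed

lemmas free_simps = fa_word_free zero_free fa_add_free fa_scale_free fa_mult_free fa_map_free

lemma fa_map_mult_word:
  assumes g: "g \<in> free_alg"
  shows "fa_map \<phi> (fa_mult (fa_word a) g) = fa_mult (fa_word (map \<phi> a)) (fa_map \<phi> g)"
  using g
proof (induction rule: fa_induct)
  case zero
  show ?case by (simp add: fa_mult_zero_right fa_map_zero)
next
  case (step g b c)
  have "fa_map \<phi> (fa_mult (fa_word a) (fa_add g (fa_scale c (fa_word b))))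
      = fa_map \<phi> (fa_add (fa_mult (fa_word a) g) (fa_scale c (fa_word (a @ b))))"
    by (simp add: fa_mult_add_right fa_mult_scale_right fa_word_mult)
  also have "\<dots> = fa_add (fa_map \<phi> (fa_mult (fa_word a) g)) (fa_scale c (fa_word (map \<phi> a @ map \<phi> b)))"
    by (simp add: fa_map_add free_simps step.hyps fa_map_scale fa_map_word)
  also have "\<dots> = fa_mult (fa_word (map \<phi> a)) (fa_map \<phi> (fa_add g (fa_scale c (fa_word b))))"
    by (simp add: fa_map_add free_simps step.hyps fa_map_scale fa_map_word step.IH
        fa_mult_add_right fa_mult_scale_right fa_word_mult)
  finally show ?case .
qed

lemma fa_map_mult:
  assumes f: "f \<in> free_alg" and g: "g \<in> free_alg"
  shows "fa_map \<phi> (fa_mult f g) = fa_mult (fa_map \<phi> f) (fa_map \<phi> g)"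
  using f
proof (induction rule: fa_induct)
  case zero
  show ?case by (simp add: fa_mult_zero_left fa_map_zero)
next
  case (step f a c)
  have "fa_map \<phi> (fa_mult (fa_add f (fa_scale c (fa_word a))) g)
      = fa_map \<phi> (fa_add (fa_mult f g) (fa_scale c (fa_mult (fa_word a) g)))"
    by (simp add: fa_mult_add_left fa_mult_scale_left)
  also have "\<dots> = fa_add (fa_map \<phi> (fa_mult f g)) (fa_scale c (fa_map \<phi> (fa_mult (fa_word a) g)))"
    by (simp add: fa_map_add free_simps step.hyps g fa_map_scale)
  also have "\<dots> = fa_mult (fa_map \<phi> (fa_add f (fa_scale c (fa_word a)))) (fa_map \<phi> g)"
    by (simp add: fa_map_add free_simps step.hyps g fa_map_scale fa_map_word step.IH
        fa_mult_add_left fa_mult_scale_left fa_map_mult_word)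
  finally show ?case .
qed

lemma fa_map_ideal:
  assumes iso: "isometry h h' \<phi>"
  shows "f \<in> cl_ideal h \<Longrightarrow> fa_map \<phi> f \<in> cl_ideal h'"
proof (induction rule: cl_ideal.induct)
  have lin: "linear \<phi>" using iso by (simp add: isometry_def)
  case (gen_add x y)
  have "\<phi> (x + y) = \<phi> x + \<phi> y" using lin by (rule linear_add)
  then show ?case
    by (simp add: fa_map_add free_simps fa_map_scale fa_map_word cl_ideal.gen_add)
next
  have lin: "linear \<phi>" using iso by (simp add: isometry_def)
  case (gen_scale a x)
  have "\<phi> (a *\<^sub>R x) = a *\<^sub>R \<phi> x" using lin by (rule linear_scale)
  then show ?case
    by (simp add: fa_map_add free_simps fa_map_scale fa_map_word cl_ideal.gen_scale)
next
  case (gen_cliff x)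
  have "h' (\<phi> x) (\<phi> x) = h x x" using iso by (simp add: isometry_def)
  then show ?case
    using cl_ideal.gen_cliff[of "\<phi> x" h']
    by (simp add: fa_map_add free_simps fa_map_scale fa_map_word)
next
  case zero
  then show ?case by (simp add: fa_map_zero cl_ideal.zero)
next
  case (add f g)
  then show ?case by (simp add: fa_map_add ideal_free cl_ideal.add)
next
  case (scale f r)
  then show ?case by (simp add: fa_map_scale cl_ideal.scale)
next
  case (lmult f g)
  then show ?case by (simp add: fa_map_mult ideal_free cl_ideal.lmult fa_map_free)
next
  case (rmult f g)
  then show ?case by (simp add: fa_map_mult ideal_free cl_ideal.rmult fa_map_free)
qed

lemma fa_map_sub:
  assumes "f \<in> free_alg" "g \<in> free_alg"
  shows "fa_map \<phi> (\<lambda>w. f w - g w) = (\<lambda>u. fa_map \<phi> f u - fa_map \<phi> g u)"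
proof -
  have "(\<lambda>w. f w - g w) = fa_add f (fa_scale (-1) g)" by (auto simp: fa_add_def fa_scale_def)
  then show ?thesis using assms
    by (simp add: fa_map_add fa_map_scale free_simps) (auto simp: fa_add_def fa_scale_def)
qed

definition cl_Phi ::
  "('v::real_vector \<Rightarrow> 'v \<Rightarrow> real) \<Rightarrow> ('w::real_vector \<Rightarrow> 'w \<Rightarrow> real) \<Rightarrow> ('v \<Rightarrow> 'w)
   \<Rightarrow> ('v list \<Rightarrow> real) set \<Rightarrow> ('w list \<Rightarrow> real) set" where
  "cl_Phi h h' \<phi> X = (if X \<in> Cl h then cl_class h' (fa_map \<phi> (cl_rep X)) else undefined)"

lemma Phi_class:
  assumes iso: "isometry h h' \<phi>" and f: "f \<in> free_alg"
  shows "cl_Phi h h' \<phi> (cl_class h f) = cl_class h' (fa_map \<phi> f)"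
proof -
  have r: "cl_rep (cl_class h f) \<in> free_alg" by (rule rep_class(1)[OF f])
  have "fa_map \<phi> (\<lambda>w. cl_rep (cl_class h f) w - f w) \<in> cl_ideal h'"
    by (rule fa_map_ideal[OF iso rep_class_neg[OF f]])
  then have "(\<lambda>u. fa_map \<phi> (cl_rep (cl_class h f)) u - fa_map \<phi> f u) \<in> cl_ideal h'"
    by (simp only: fa_map_sub[OF r f])
  then have "cl_class h' (fa_map \<phi> (cl_rep (cl_class h f))) = cl_class h' (fa_map \<phi> f)"
    by (rule iffD2[OF class_eq_iff[OF fa_map_free[OF r] fa_map_free[OF f]]])
  then show ?thesis unfolding cl_Phi_def using class_in_Cl[OF f, of h] by simp
qed

lemma Cl_cases:
  assumes "X \<in> Cl h" obtains f where "f \<in> free_alg" "X = cl_class h f"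
  using assms Cl_iff by blast

lemma Phi_hom:
  assumes iso: "isometry h h' \<phi>"
  shows "cl_alg_hom h h' (cl_Phi h h' \<phi>) \<and> (\<forall>v. cl_Phi h h' \<phi> (cl_iota h v) = cl_iota h' (\<phi> v))"
proof -
  have mem: "cl_Phi h h' \<phi> X \<in> Cl h'" if "X \<in> Cl h" for X
    using that by (elim Cl_cases) (simp add: Phi_class[OF iso] class_in_Cl fa_map_free)
  have add: "cl_Phi h h' \<phi> (cl_add h X Y) = cl_add h' (cl_Phi h h' \<phi> X) (cl_Phi h h' \<phi> Y)"
    if XY: "X \<in> Cl h" "Y \<in> Cl h" for X Y
  proof -
    obtain f where f: "f \<in> free_alg" "X = cl_class h f" using XY(1) by (rule Cl_cases)
    obtain g where g: "g \<in> free_alg" "Y = cl_class h g" using XY(2) by (rule Cl_cases)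
    show ?thesis using f g
      by (simp add: Phi_class[OF iso] cl_add_class fa_map_free fa_add_free fa_map_add)
  qed
  have mult: "cl_Phi h h' \<phi> (cl_mult h X Y) = cl_mult h' (cl_Phi h h' \<phi> X) (cl_Phi h h' \<phi> Y)"
    if XY: "X \<in> Cl h" "Y \<in> Cl h" for X Y
  proof -
    obtain f where f: "f \<in> free_alg" "X = cl_class h f" using XY(1) by (rule Cl_cases)
    obtain g where g: "g \<in> free_alg" "Y = cl_class h g" using XY(2) by (rule Cl_cases)
    show ?thesis using f g
      by (simp add: Phi_class[OF iso] cl_mult_class fa_map_free fa_mult_free fa_map_mult)
  qed
  have scale: "cl_Phi h h' \<phi> (cl_scale h r X) = cl_scale h' r (cl_Phi h h' \<phi> X)"
    if XY: "X \<in> Cl h" for X r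
  proof -
    obtain f where f: "f \<in> free_alg" "X = cl_class h f" using XY(1) by (rule Cl_cases)
    show ?thesis using f
      by (simp add: Phi_class[OF iso] cl_scale_class fa_map_free fa_scale_free fa_map_scale)
  qed
  have one: "cl_Phi h h' \<phi> (cl_one h) = cl_one h'"
    unfolding cl_one_def by (simp add: Phi_class[OF iso] fa_word_free fa_map_word)
  have iota: "cl_Phi h h' \<phi> (cl_iota h v) = cl_iota h' (\<phi> v)" for v
    unfolding cl_iota_def by (simp add: Phi_class[OF iso] fa_word_free fa_map_word)
  have out: "cl_Phi h h' \<phi> X = undefined" if "X \<notin> Cl h" for X
    using that by (simp add: cl_Phi_def)
  show ?thesis unfolding cl_alg_hom_def
    using mem add mult scale one iota out by blast
qed

lemma hom_unique:
  assumes h1: "cl_alg_hom h h' \<Phi>1" and h2: "cl_alg_hom h h' \<Phi>2"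
    and io: "\<And>v. \<Phi>1 (cl_iota h v) = \<Phi>2 (cl_iota h v)"
  shows "\<Phi>1 = \<Phi>2"
proof
  fix X
  show "\<Phi>1 X = \<Phi>2 X"
  proof (cases "X \<in> Cl h")
    case False
    then show ?thesis using h1 h2 unfolding cl_alg_hom_def by simp
  next
    case True
    then show ?thesis
    proof (induction rule: cl_induct)
      case one then show ?case using h1 h2 unfolding cl_alg_hom_def by simp
    next
      case (iota v) then show ?case by (rule io)
    next
      case (add X Y) then show ?case using h1 h2 unfolding cl_alg_hom_def by simp
    next
      case (mult X Y) then show ?case using h1 h2 unfolding cl_alg_hom_def by simp
    next
      case (scale r X) then show ?case using h1 h2 unfolding cl_alg_hom_def by simp
    qed
  qed
qed

lemma cl_map_Phi:
  assumes iso: "isometry h h' \<phi>"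
  shows "cl_map h h' \<phi> = cl_Phi h h' \<phi>"
  unfolding cl_map_def
proof (rule the_equality)
  show "cl_alg_hom h h' (cl_Phi h h' \<phi>) \<and> (\<forall>v. cl_Phi h h' \<phi> (cl_iota h v) = cl_iota h' (\<phi> v))"
    by (rule Phi_hom[OF iso])
next
  fix \<Phi> assume a: "cl_alg_hom h h' \<Phi> \<and> (\<forall>v. \<Phi> (cl_iota h v) = cl_iota h' (\<phi> v))"
  show "\<Phi> = cl_Phi h h' \<phi>"
    using hom_unique[of h h' \<Phi> "cl_Phi h h' \<phi>"] a Phi_hom[OF iso] by auto
qed

lemma cl_map_hom:
  assumes iso: "isometry h h' \<phi>"
  shows "cl_alg_hom h h' (cl_map h h' \<phi>)" "\<And>v. cl_map h h' \<phi> (cl_iota h v) = cl_iota h' (\<phi> v)"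
  using Phi_hom[OF iso] cl_map_Phi[OF iso] by auto



lemma lin_add: "Vector_Spaces.linear s1 s2 f \<Longrightarrow> f (x + y) = f x + f y"
  by (rule module_hom.add[OF module_hom_linearI])
lemma lin_scale: "Vector_Spaces.linear s1 s2 f \<Longrightarrow> f (s1 c x) = s2 c (f x)"
  by (rule module_hom.scale[OF module_hom_linearI])

lemma iota_add: "cl_iota h (x + y) = cl_add h (cl_iota h x) (cl_iota h y)"
proof -
  have "cl_add h (cl_iota h x) (cl_iota h y) = cl_class h (fa_add (fa_word [x]) (fa_word [y]))"
    unfolding cl_iota_def by (rule cl_add_class[OF fa_word_free fa_word_free])
  moreover have "cl_class h (fa_word [x + y]) = cl_class h (fa_add (fa_word [x]) (fa_word [y]))"
  proof (rule iffD2[OF class_eq_iff[OF fa_word_free fa_add_free[OF fa_word_free fa_word_free]]])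
    have "fa_add (fa_word [x + y]) (fa_scale (-1) (fa_add (fa_word [x]) (fa_word [y]))) =
          (\<lambda>w. fa_word [x + y] w - fa_add (fa_word [x]) (fa_word [y]) w)"
      by (rule ext) (simp add: fa_add_def fa_scale_def)
    then show "(\<lambda>w. fa_word [x + y] w - fa_add (fa_word [x]) (fa_word [y]) w) \<in> cl_ideal h"
      using cl_ideal.gen_add[of x y h] by (simp only:)
  qed
  ultimately show ?thesis unfolding cl_iota_def by simp
qed

lemma iota_scale: "cl_iota h (a *\<^sub>R x) = cl_scale h a (cl_iota h x)"
proof -
  have "cl_scale h a (cl_iota h x) = cl_class h (fa_scale a (fa_word [x]))"
    unfolding cl_iota_def by (rule cl_scale_class[OF fa_word_free])
  moreover have "cl_class h (fa_word [a *\<^sub>R x]) = cl_class h (fa_scale a (fa_word [x]))"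
  proof (rule iffD2[OF class_eq_iff[OF fa_word_free fa_scale_free[OF fa_word_free]]])
    have "fa_add (fa_word [a *\<^sub>R x]) (fa_scale (- a) (fa_word [x])) =
          (\<lambda>w. fa_word [a *\<^sub>R x] w - fa_scale a (fa_word [x]) w)"
      by (rule ext) (simp add: fa_add_def fa_scale_def)
    then show "(\<lambda>w. fa_word [a *\<^sub>R x] w - fa_scale a (fa_word [x]) w) \<in> cl_ideal h"
      using cl_ideal.gen_scale[of a x h] by (simp only:)
  qed
  ultimately show ?thesis unfolding cl_iota_def by simp
qed

lemma iota_sq: "cl_mult h (cl_iota h x) (cl_iota h x) = cl_scale h (h x x) (cl_one h)"
proof -
  have "cl_mult h (cl_iota h x) (cl_iota h x) = cl_class h (fa_word [x, x])"
    unfolding cl_iota_def using cl_mult_class[OF fa_word_free fa_word_free, of h "[x]" "[x]"]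
    by (simp add: fa_word_mult)
  moreover have "cl_scale h (h x x) (cl_one h) = cl_class h (fa_scale (h x x) (fa_word []))"
    unfolding cl_one_def by (rule cl_scale_class[OF fa_word_free])
  moreover have "cl_class h (fa_word [x, x]) = cl_class h (fa_scale (h x x) (fa_word []))"
  proof (rule iffD2[OF class_eq_iff[OF fa_word_free fa_scale_free[OF fa_word_free]]])
    have "fa_add (fa_word [x, x]) (fa_scale (- h x x) (fa_word [])) =
          (\<lambda>w. fa_word [x, x] w - fa_scale (h x x) (fa_word []) w)"
      by (rule ext) (simp add: fa_add_def fa_scale_def)
    then show "(\<lambda>w. fa_word [x, x] w - fa_scale (h x x) (fa_word []) w) \<in> cl_ideal h"
      using cl_ideal.gen_cliff[of x h] by (simp only:)
  qed
  ultimately show ?thesis by simp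
qed

lemma rep_add:
  assumes "clifford_rep h sc \<gamma>"
  shows "rep_V h \<gamma> (x + y) = (\<lambda>s. rep_V h \<gamma> x s + rep_V h \<gamma> y s)"
  using assms unfolding clifford_rep_def rep_V_def
  by (simp add: iota_add cl_iota_Cl)

lemma rep_scale:
  assumes "clifford_rep h sc \<gamma>"
  shows "rep_V h \<gamma> (a *\<^sub>R x) = (\<lambda>s. sc (complex_of_real a) (rep_V h \<gamma> x s))"
  using assms unfolding clifford_rep_def rep_V_def
  by (simp add: iota_scale cl_iota_Cl)

lemma rep_sq:
  assumes "clifford_rep h sc \<gamma>"
  shows "rep_V h \<gamma> x \<circ> rep_V h \<gamma> x = (\<lambda>s. sc (complex_of_real (h x x)) s)"
proof -
  have "rep_V h \<gamma> x \<circ> rep_V h \<gamma> x = \<gamma> (cl_mult h (cl_iota h x) (cl_iota h x))"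
    using assms unfolding clifford_rep_def rep_V_def by (simp add: cl_iota_Cl)
  also have "\<dots> = \<gamma> (cl_scale h (h x x) (cl_one h))" by (simp only: iota_sq)
  also have "\<dots> = (\<lambda>s. sc (complex_of_real (h x x)) s)"
    using assms unfolding clifford_rep_def by (simp add: cl_one_Cl)
  finally show ?thesis .
qed

lemma Ad_add:
  assumes "Vector_Spaces.linear sc sc' \<phi>"
  shows "Ad \<phi> (\<lambda>s. A s + B s) = (\<lambda>t. Ad \<phi> A t + Ad \<phi> B t)"
  unfolding Ad_def by (simp add: lin_add[OF assms] o_def)

lemma Ad_scale:
  assumes "Vector_Spaces.linear sc sc' \<phi>"
  shows "Ad \<phi> (\<lambda>s. sc c (A s)) = (\<lambda>t. sc' c (Ad \<phi> A t))"
  unfolding Ad_def by (simp add: lin_scale[OF assms] o_def)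

lemma Ad_comp:
  assumes "bij \<phi>"
  shows "Ad \<phi> (A \<circ> B) = Ad \<phi> A \<circ> Ad \<phi> B"
  unfolding Ad_def using bij_is_inj[OF assms] by (auto simp: o_def inv_f_f)

lemma Ad_inj:
  assumes "bij \<phi>" "Ad \<phi> A = Ad \<phi> B"
  shows "A = B"
proof
  fix s
  have "Ad \<phi> A (\<phi> s) = Ad \<phi> B (\<phi> s)" using assms(2) by simp
  then have "\<phi> (A s) = \<phi> (B s)" unfolding Ad_def using bij_is_inj[OF assms(1)] by (simp add: inv_f_f)
  then show "A s = B s" using bij_is_inj[OF assms(1)] by (simp add: inj_eq)
qed

lemma Ad_sc:
  assumes "Vector_Spaces.linear sc sc' \<phi>" "bij \<phi>"
  shows "Ad \<phi> (\<lambda>s. sc c s) = (\<lambda>t. sc' c t)"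
  unfolding Ad_def using lin_scale[OF assms(1)] bij_is_surj[OF assms(2)]
  by (simp add: o_def surj_f_inv_f)

lemma Ad_right:
  assumes "bij \<phi>"
  shows "Ad \<phi> A \<circ> \<phi> = \<phi> \<circ> A"
  unfolding Ad_def using bij_is_inj[OF assms] by (auto simp: o_def inv_f_f)



lemma polar:
  assumes "quadratic_space h"
  shows "h x y = (h (x + y) (x + y) - h x x - h y y) / 2"
proof -
  have lin: "\<And>x. linear (h x)" and sym: "\<And>x y. h x y = h y x"
    using assms unfolding quadratic_space_def by auto
  have "h (x + y) (x + y) = h (x + y) x + h (x + y) y" by (rule linear_add[OF lin])
  also have "\<dots> = h x x + h y x + (h x y + h y y)"
    by (simp add: sym[of "x + y"] linear_add[OF lin])
  finally show ?thesis by (simp add: sym[of y x])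
qed

lemma qs_zero: "quadratic_space h \<Longrightarrow> h x 0 = 0"
  unfolding quadratic_space_def using linear_0 by blast

theorem main_part2:
  fixes h :: "'v::real_vector \<Rightarrow> 'v \<Rightarrow> real"
    and h' :: "'w::real_vector \<Rightarrow> 'w \<Rightarrow> real"
    and sc :: "complex \<Rightarrow> 's::ab_group_add \<Rightarrow> 's"
    and sc' :: "complex \<Rightarrow> 't::ab_group_add \<Rightarrow> 't"
    and \<gamma> :: "('v list \<Rightarrow> real) set \<Rightarrow> ('s \<Rightarrow> 's)"
    and \<gamma>' :: "('w list \<Rightarrow> real) set \<Rightarrow> ('t \<Rightarrow> 't)"
  assumes qs: "quadratic_space h" and qs': "quadratic_space h'"
    and cr: "clifford_rep h sc \<gamma>" and cr': "clifford_rep h' sc' \<gamma>'"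
    and wf: "weakly_faithful h \<gamma>" and wf': "weakly_faithful h' \<gamma>'"
    and lin: "Vector_Spaces.linear sc sc' \<phi>" and bij: "bij \<phi>"
    and rng: "Ad \<phi> ` range (rep_V h \<gamma>) = range (rep_V h' \<gamma>')"
  defines "\<phi>0 \<equiv> inv (rep_V h' \<gamma>') \<circ> Ad \<phi> \<circ> rep_V h \<gamma>"
  shows "isometry h h' \<phi>0 \<and> bij \<phi>0 \<and> clifford_rep_iso h h' sc sc' \<gamma> \<gamma>' \<phi>0 \<phi>"
proof -
  let ?g = "rep_V h \<gamma>" and ?g' = "rep_V h' \<gamma>'"
  have injg: "inj ?g" using wf by (simp add: weakly_faithful_def)
  have injg': "inj ?g'" using wf' by (simp add: weakly_faithful_def)
  have K: "?g' (\<phi>0 v) = Ad \<phi> (?g v)" for v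
  proof -
    have "Ad \<phi> (?g v) \<in> range ?g'" using rng by blast
    then show ?thesis unfolding \<phi>0_def by (simp add: f_inv_into_f)
  qed
  have vs': "vector_space sc'" using lin by (rule Vector_Spaces.linear.axioms(2))
  have add0: "\<phi>0 (x + y) = \<phi>0 x + \<phi>0 y" for x y
  proof -
    have "?g' (\<phi>0 (x + y)) = ?g' (\<phi>0 x + \<phi>0 y)"
      by (simp add: K rep_add[OF cr] rep_add[OF cr'] Ad_add[OF lin])
    then show ?thesis using injg' by (simp add: inj_eq)
  qed
  have scale0: "\<phi>0 (a *\<^sub>R x) = a *\<^sub>R \<phi>0 x" for a x
  proof -
    have "?g' (\<phi>0 (a *\<^sub>R x)) = ?g' (a *\<^sub>R \<phi>0 x)"
      by (simp add: K rep_scale[OF cr] rep_scale[OF cr'] Ad_scale[OF lin])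
    then show ?thesis using injg' by (simp add: inj_eq)
  qed
  have lin0: "linear \<phi>0" by (rule linearI[OF add0 scale0])
  have quad: "h' (\<phi>0 x) (\<phi>0 x) = h x x" for x
  proof -
    have "(\<lambda>t. sc' (complex_of_real (h' (\<phi>0 x) (\<phi>0 x))) t) = ?g' (\<phi>0 x) \<circ> ?g' (\<phi>0 x)"
      by (rule rep_sq[OF cr', symmetric])
    also have "\<dots> = Ad \<phi> (?g x \<circ> ?g x)" by (simp add: K Ad_comp[OF bij])
    also have "\<dots> = (\<lambda>t. sc' (complex_of_real (h x x)) t)"
      by (simp add: rep_sq[OF cr] Ad_sc[OF lin bij])
    finally have eq: "\<And>t. sc' (complex_of_real (h' (\<phi>0 x) (\<phi>0 x))) t = sc' (complex_of_real (h x x)) t"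
      by metis
    show ?thesis
    proof (cases "\<exists>t::'t. t \<noteq> 0")
      case True
      then obtain t :: 't where "t \<noteq> 0" by blast
      then show ?thesis using eq[of t] vector_space.scale_cancel_right[OF vs'] by simp
    next
      case False
      then have allz: "\<And>t::'t. t = 0" by blast
      have "?g' a = ?g' b" for a b
        by (rule ext) (simp add: allz[of "?g' a _"] allz[of "?g' b _"])
      then have wz: "\<And>a b::'w. a = b" using injg' by (simp add: inj_eq)
      have sz: "\<And>s::'s. s = 0"
      proof -
        fix s :: 's
        have "\<phi> s = \<phi> 0" using allz[of "\<phi> s"] allz[of "\<phi> 0"] by simp
        then show "s = 0" using bij_is_inj[OF bij] by (simp add: inj_eq)
      qed
      have "?g a = ?g b" for a b
        by (rule ext) (simp add: sz[of "?g a _"] sz[of "?g b _"])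
      then have vz: "\<And>a b::'v. a = b" using injg by (simp add: inj_eq)
      have "h' (\<phi>0 x) (\<phi>0 x) = h' (\<phi>0 x) 0" using wz[of "\<phi>0 x" 0] by simp
      also have "\<dots> = 0" by (rule qs_zero[OF qs'])
      also have "\<dots> = h x 0" by (rule qs_zero[OF qs, symmetric])
      also have "\<dots> = h x x" using vz[of x 0] by simp
      finally show ?thesis .
    qed
  qed
  have isom: "isometry h h' \<phi>0"
    unfolding isometry_def
  proof (intro conjI allI lin0)
    fix x y
    show "h' (\<phi>0 x) (\<phi>0 y) = h x y"
      using polar[OF qs', of "\<phi>0 x" "\<phi>0 y"] polar[OF qs, of x y] quad[of x] quad[of y] quad[of "x + y"]
      by (simp add: add0)
  qed
  have inj0: "inj \<phi>0"
  proof (rule injI)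
    fix x y assume "\<phi>0 x = \<phi>0 y"
    then have "Ad \<phi> (?g x) = Ad \<phi> (?g y)" using K by metis
    then have "?g x = ?g y" by (rule Ad_inj[OF bij])
    then show "x = y" using injg by (simp add: inj_eq)
  qed
  have surj0: "surj \<phi>0"
  proof (rule surjI[of _ "\<lambda>w. SOME v. \<phi>0 v = w"])
    fix w
    have "?g' w \<in> Ad \<phi> ` range ?g" using rng by simp
    then obtain v where "?g' w = Ad \<phi> (?g v)" by blast
    then have "?g' w = ?g' (\<phi>0 v)" by (simp add: K)
    then have "\<phi>0 v = w" using injg' by (simp add: inj_eq)
    then show "\<phi>0 (SOME v. \<phi>0 v = w) = w" by (rule someI)
  qed
  have bij0: "bij \<phi>0" using inj0 surj0 by (simp add: bij_def)
  have hom: "cl_alg_hom h h' (cl_map h h' \<phi>0)"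
    and mio: "\<And>v. cl_map h h' \<phi>0 (cl_iota h v) = cl_iota h' (\<phi>0 v)"
    using cl_map_hom[OF isom] by auto
  let ?M = "cl_map h h' \<phi>0"
  have morph: "\<gamma>' (?M X) \<circ> \<phi> = \<phi> \<circ> \<gamma> X" if X: "X \<in> Cl h" for X
    using X
  proof (induction rule: cl_induct)
    case one
    have "?M (cl_one h) = cl_one h'" using hom by (simp add: cl_alg_hom_def)
    then show ?case using cr cr' by (simp add: clifford_rep_def)
  next
    case (iota v)
    have "\<gamma>' (?M (cl_iota h v)) = Ad \<phi> (\<gamma> (cl_iota h v))"
      using K[of v] by (simp add: mio rep_V_def)
    then show ?case by (simp add: Ad_right[OF bij])
  next
    case (add X Y)
    have MX: "?M X \<in> Cl h'" "?M Y \<in> Cl h'" using hom add.hyps by (auto simp: cl_alg_hom_def)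
    have "?M (cl_add h X Y) = cl_add h' (?M X) (?M Y)" using hom add.hyps by (simp add: cl_alg_hom_def)
    then have "\<gamma>' (?M (cl_add h X Y)) = (\<lambda>t. \<gamma>' (?M X) t + \<gamma>' (?M Y) t)"
      using cr' MX by (simp add: clifford_rep_def)
    moreover have "\<gamma> (cl_add h X Y) = (\<lambda>s. \<gamma> X s + \<gamma> Y s)"
      using cr add.hyps by (simp add: clifford_rep_def)
    ultimately show ?case
    proof -
      assume a1: "\<gamma>' (?M (cl_add h X Y)) = (\<lambda>t. \<gamma>' (?M X) t + \<gamma>' (?M Y) t)"
        and a2: "\<gamma> (cl_add h X Y) = (\<lambda>s. \<gamma> X s + \<gamma> Y s)"
      show ?thesis
      proof
        fix s
        have "\<gamma>' (?M X) (\<phi> s) = \<phi> (\<gamma> X s)" using add.IH(1) by (metis comp_apply)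
        moreover have "\<gamma>' (?M Y) (\<phi> s) = \<phi> (\<gamma> Y s)" using add.IH(2) by (metis comp_apply)
        ultimately show "(\<gamma>' (?M (cl_add h X Y)) \<circ> \<phi>) s = (\<phi> \<circ> \<gamma> (cl_add h X Y)) s"
          using a1 a2 by (simp add: lin_add[OF lin])
      qed
    qed
  next
    case (mult X Y)
    have MX: "?M X \<in> Cl h'" "?M Y \<in> Cl h'" using hom mult.hyps by (auto simp: cl_alg_hom_def)
    have "?M (cl_mult h X Y) = cl_mult h' (?M X) (?M Y)" using hom mult.hyps by (simp add: cl_alg_hom_def)
    then have "\<gamma>' (?M (cl_mult h X Y)) = \<gamma>' (?M X) \<circ> \<gamma>' (?M Y)"
      using cr' MX by (simp add: clifford_rep_def)
    moreover have "\<gamma> (cl_mult h X Y) = \<gamma> X \<circ> \<gamma> Y"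
      using cr mult.hyps by (simp add: clifford_rep_def)
    ultimately have a1: "\<gamma>' (?M (cl_mult h X Y)) = \<gamma>' (?M X) \<circ> \<gamma>' (?M Y)"
      and a2: "\<gamma> (cl_mult h X Y) = \<gamma> X \<circ> \<gamma> Y" by blast+
    have "\<gamma>' (?M (cl_mult h X Y)) \<circ> \<phi> = \<gamma>' (?M X) \<circ> (\<gamma>' (?M Y) \<circ> \<phi>)"
      using a1 by (simp only: comp_assoc)
    also have "\<dots> = \<gamma>' (?M X) \<circ> (\<phi> \<circ> \<gamma> Y)" using mult.IH(2) by (simp only:)
    also have "\<dots> = (\<gamma>' (?M X) \<circ> \<phi>) \<circ> \<gamma> Y" by (simp only: comp_assoc)
    also have "\<dots> = (\<phi> \<circ> \<gamma> X) \<circ> \<gamma> Y" using mult.IH(1) by (simp only:)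
    also have "\<dots> = \<phi> \<circ> \<gamma> (cl_mult h X Y)" using a2 by (simp only: comp_assoc)
    finally show ?case .
  next
    case (scale r X)
    have MX: "?M X \<in> Cl h'" using hom scale.hyps by (auto simp: cl_alg_hom_def)
    have "?M (cl_scale h r X) = cl_scale h' r (?M X)" using hom scale.hyps by (simp add: cl_alg_hom_def)
    then have a1: "\<gamma>' (?M (cl_scale h r X)) = (\<lambda>t. sc' (complex_of_real r) (\<gamma>' (?M X) t))"
      using cr' MX by (simp add: clifford_rep_def)
    have a2: "\<gamma> (cl_scale h r X) = (\<lambda>s. sc (complex_of_real r) (\<gamma> X s))"
      using cr scale.hyps by (simp add: clifford_rep_def)
    show ?case
    proof
      fix s
      have "\<gamma>' (?M X) (\<phi> s) = \<phi> (\<gamma> X s)" using scale.IH by (metis comp_apply)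
      then show "(\<gamma>' (?M (cl_scale h r X)) \<circ> \<phi>) s = (\<phi> \<circ> \<gamma> (cl_scale h r X)) s"
        using a1 a2 by (simp add: lin_scale[OF lin])
    qed
  qed
  have "clifford_rep_iso h h' sc sc' \<gamma> \<gamma>' \<phi>0 \<phi>"
    unfolding clifford_rep_iso_def clifford_rep_morphism_def
    using isom lin morph bij0 bij by blast
  then show ?thesis using isom bij0 by blast
qed

theorem main_part1:
  fixes h :: "'v::real_vector \<Rightarrow> 'v \<Rightarrow> real"
    and h' :: "'w::real_vector \<Rightarrow> 'w \<Rightarrow> real"
    and sc :: "complex \<Rightarrow> 's::ab_group_add \<Rightarrow> 's"
    and sc' :: "complex \<Rightarrow> 't::ab_group_add \<Rightarrow> 't"
    and \<gamma> :: "('v list \<Rightarrow> real) set \<Rightarrow> ('s \<Rightarrow> 's)"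
    and \<gamma>' :: "('w list \<Rightarrow> real) set \<Rightarrow> ('t \<Rightarrow> 't)"
  assumes wf': "weakly_faithful h' \<gamma>'"
    and iso: "clifford_rep_iso h h' sc sc' \<gamma> \<gamma>' \<phi>0 \<phi>"
  shows "Ad \<phi> ` range (rep_V h \<gamma>) = range (rep_V h' \<gamma>') \<and>
            \<phi>0 = inv (rep_V h' \<gamma>') \<circ> Ad \<phi> \<circ> rep_V h \<gamma>"
proof -
  let ?g = "rep_V h \<gamma>" and ?g' = "rep_V h' \<gamma>'"
  have injg': "inj ?g'" using wf' by (simp add: weakly_faithful_def)
  have isom: "isometry h h' \<phi>0" and bij0: "bij \<phi>0" and bij: "bij \<phi>"
    and mor: "\<And>X. X \<in> Cl h \<Longrightarrow> \<gamma>' (cl_map h h' \<phi>0 X) \<circ> \<phi> = \<phi> \<circ> \<gamma> X"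
    using iso unfolding clifford_rep_iso_def clifford_rep_morphism_def by auto
  have K: "?g' (\<phi>0 v) = Ad \<phi> (?g v)" for v
  proof -
    have "\<gamma>' (cl_iota h' (\<phi>0 v)) \<circ> \<phi> = \<phi> \<circ> \<gamma> (cl_iota h v)"
      using mor[OF cl_iota_Cl] cl_map_hom(2)[OF isom] by metis
    then have "\<gamma>' (cl_iota h' (\<phi>0 v)) \<circ> \<phi> \<circ> inv \<phi> = Ad \<phi> (\<gamma> (cl_iota h v))"
      by (simp add: Ad_def)
    moreover have "\<phi> \<circ> inv \<phi> = id" using bij_is_surj[OF bij] by (simp add: surj_iff)
    ultimately show ?thesis by (simp add: rep_V_def comp_assoc)
  qed
  have "Ad \<phi> ` range ?g = range (\<lambda>v. ?g' (\<phi>0 v))" by (simp add: K image_image)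
  also have "\<dots> = ?g' ` range \<phi>0" by (simp add: image_image)
  also have "\<dots> = range ?g'" using bij_is_surj[OF bij0] by simp
  finally have r: "Ad \<phi> ` range ?g = range ?g'" .
  have "\<phi>0 = inv ?g' \<circ> Ad \<phi> \<circ> ?g"
  proof
    fix v
    show "\<phi>0 v = (inv ?g' \<circ> Ad \<phi> \<circ> ?g) v" using K[of v, symmetric] injg' by (simp add: inv_f_f)
  qed
  then show ?thesis using r by blast
qed

theorem proposition3p6:
  fixes h :: "'v::real_vector \<Rightarrow> 'v \<Rightarrow> real"
    and h' :: "'w::real_vector \<Rightarrow> 'w \<Rightarrow> real"
    and sc :: "complex \<Rightarrow> 's::ab_group_add \<Rightarrow> 's"
    and sc' :: "complex \<Rightarrow> 't::ab_group_add \<Rightarrow> 't"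
    and \<gamma> :: "('v list \<Rightarrow> real) set \<Rightarrow> ('s \<Rightarrow> 's)"
    and \<gamma>' :: "('w list \<Rightarrow> real) set \<Rightarrow> ('t \<Rightarrow> 't)"
  assumes "quadratic_space h" and "quadratic_space h'"
    and "fd_complex_space sc" and "fd_complex_space sc'"
    and "clifford_rep h sc \<gamma>" and "clifford_rep h' sc' \<gamma>'"
    and "weakly_faithful h \<gamma>" and "weakly_faithful h' \<gamma>'"
  shows "(\<forall>\<phi>0 \<phi>. clifford_rep_iso h h' sc sc' \<gamma> \<gamma>' \<phi>0 \<phi> \<longrightarrow>
            Ad \<phi> ` range (rep_V h \<gamma>) = range (rep_V h' \<gamma>') \<and>
            \<phi>0 = inv (rep_V h' \<gamma>') \<circ> Ad \<phi> \<circ> rep_V h \<gamma>)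
       \<and> (\<forall>\<phi>. Vector_Spaces.linear sc sc' \<phi> \<and> bij \<phi> \<and>
            Ad \<phi> ` range (rep_V h \<gamma>) = range (rep_V h' \<gamma>') \<longrightarrow>
            (let \<phi>0 = inv (rep_V h' \<gamma>') \<circ> Ad \<phi> \<circ> rep_V h \<gamma>
             in isometry h h' \<phi>0 \<and> bij \<phi>0 \<and> clifford_rep_iso h h' sc sc' \<gamma> \<gamma>' \<phi>0 \<phi>))"
proof (intro conjI allI impI)
  fix \<phi>0 \<phi>
  assume "clifford_rep_iso h h' sc sc' \<gamma> \<gamma>' \<phi>0 \<phi>"
  from main_part1[OF assms(8) this]
  show "Ad \<phi> ` range (rep_V h \<gamma>) = range (rep_V h' \<gamma>')"
    and "\<phi>0 = inv (rep_V h' \<gamma>') \<circ> Ad \<phi> \<circ> rep_V h \<gamma>" by blast+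
next
  fix \<phi>
  assume a: "Vector_Spaces.linear sc sc' \<phi> \<and> bij \<phi> \<and>
            Ad \<phi> ` range (rep_V h \<gamma>) = range (rep_V h' \<gamma>')"
  show "let \<phi>0 = inv (rep_V h' \<gamma>') \<circ> Ad \<phi> \<circ> rep_V h \<gamma>
             in isometry h h' \<phi>0 \<and> bij \<phi>0 \<and> clifford_rep_iso h h' sc sc' \<gamma> \<gamma>' \<phi>0 \<phi>"
    unfolding Let_def
    using main_part2[OF assms(1,2,5,6,7,8)] a by blast
qed

end
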